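(* Let $s\in[\tfrac12,1)$. Define $\phi_s:\tilde\Delta\to\tilde\Delta$, using the fundamental parallelogram $P$ with vertices $\pm(-3/2,\sqrt3/2)$, $\pm(1/2,\sqrt3/2)$ to represent points, by \[ \phi_s(x,y)=\begin{cases}(x,y)+(\tfrac12,-\tfrac{\sqrt3}{2}) & \text{if } y\ge 0,\\ (x,y)+(-\tfrac12,\tfrac{\sqrt3}{2}) & \text{if } y<0,\end{cases} \] taken modulo $\Lambda$. Then $\phi_s$ conjugates $\tilde f_s$ to $\tilde f_{1-s}$, i.e. $\phi_s\circ\tilde f_s=\tilde f_{1-s}\circ\phi_s$.
   Context: Let $\Lambda\subset\mathbb{R}^2$ be the lattice generated by $(2,0)$ and $(1,-\sqrt3)$, and let $\tilde\Delta=\mathbb{R}^2/\Lambda$. Subsets of $\mathbb{R}^2$ are regarded as subsets of $\tilde\Delta$ via the projection. Let $A_0$ be the equilateral triangle with vertices $a_1=(-1,0)$, $a_2=(-\tfrac12,\tfrac{\sqrt3}{2})$, $a_3=(0,0)$, and for $n=1,2,3$ let $A_n$ be the reflection of $A_0$ in the line through $a_n$ and $a_{n+1 \bmod 3}$. Let $\iota(x,y)=(-x,-y)$. Let $\omega_0=(1,0)$, $\omega_1=(-\tfrac12,\tfrac{\sqrt3}{2})$, $\omega_2=(-\tfrac12,-\tfrac{\sqrt3}{2})$. For a parameter $u\in(0,1)$ and $i\in\{0,1,2\}$ define $\tilde f_i(x,y)=(x,y)+\sigma_i u\,\omega_i \bmod \Lambda$, where $\sigma_i=1$ if $(x,y)\in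 \bigcup_{\alpha\ne 3-i}A_\alpha\cup\iota(A_{3-i})$ and $\sigma_i=-1$ otherwise; the tetrahedral PET is $\tilde f_u=\tilde f_2\circ\tilde f_1\circ\tilde f_0$. It is a piecewise translation, undefined on the boundaries of the pieces where it is discontinuous; the conjugacy identity is understood where both sides are defined. *)

theory Defs
  imports "HOL-Analysis.Analysis"
begin

text \<open>Points of the plane are pairs of reals; the torus is the plane modulo the lattice Lambda.
  All maps are defined on representatives in the plane; identities on the torus are
  stated as congruences modulo Lambda.\<close>

definition Lambda :: "(real \<times> real) set" where
  "Lambda = {of_int a *\<^sub>R (2, 0) + of_int b *\<^sub>R (1, - sqrt 3) | a b. True}"

text \<open>Membership of a plane point in the projection of a plane set S to the torus.\<close>
definition torus_mem :: "real \<times> real \<Rightarrow> (real \<times> real) set \<Rightarrow> bool" where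
  "torus_mem p S \<longleftrightarrow> (\<exists>q\<in>S. p - q \<in> Lambda)"

definition vert :: "nat \<Rightarrow> real \<times> real" where
  "vert n = (if n = 1 then (-1, 0) else if n = 2 then (-1/2, sqrt 3 / 2) else (0, 0))"

definition reflect_line :: "real \<times> real \<Rightarrow> real \<times> real \<Rightarrow> real \<times> real \<Rightarrow> real \<times> real" where
  "reflect_line a b p = a + (2 * (((p - a) \<bullet> (b - a)) / ((b - a) \<bullet> (b - a)))) *\<^sub>R (b - a) - (p - a)"

definition A :: "nat \<Rightarrow> (real \<times> real) set" where
  "A n = (if n = 0 then convex hull {vert 1, vert 2, vert 3}
          else reflect_line (vert n) (vert (n mod 3 + 1)) ` (convex hull {vert 1, vert 2, vert 3}))"

definition iota :: "real \<times> real \<Rightarrow> real \<times> real" where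
  "iota p = - p"

definition omega :: "nat \<Rightarrow> real \<times> real" where
  "omega i = (if i = 0 then (1, 0) else if i = 1 then (-1/2, sqrt 3 / 2) else (-1/2, - sqrt 3 / 2))"

definition sigma :: "nat \<Rightarrow> real \<times> real \<Rightarrow> real" where
  "sigma i p = (if torus_mem p ((\<Union>\<alpha>\<in>{0,1,2,3::nat} - {3 - i}. A \<alpha>) \<union> iota ` A (3 - i))
                then 1 else -1)"

definition ftil :: "real \<Rightarrow> nat \<Rightarrow> real \<times> real \<Rightarrow> real \<times> real" where
  "ftil u i p = p + (sigma i p * u) *\<^sub>R omega i"

definition pet :: "real \<Rightarrow> real \<times> real \<Rightarrow> real \<times> real" where
  "pet u = ftil u 2 \<circ> ftil u 1 \<circ> ftil u 0"

text \<open>The piecewise translation is defined at p iff it is a translation (modulo Lambda)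
  on a neighbourhood of p, i.e. p is not on a discontinuity boundary.\<close>
definition pet_defined :: "real \<Rightarrow> real \<times> real \<Rightarrow> bool" where
  "pet_defined u p \<longleftrightarrow> (\<exists>e>0. \<exists>t. \<forall>q\<in>ball p e. pet u q - q - t \<in> Lambda)"

definition Pfund :: "(real \<times> real) set" where
  "Pfund = convex hull {(-3/2, sqrt 3 / 2), (1/2, sqrt 3 / 2), (3/2, - sqrt 3 / 2), (-1/2, - sqrt 3 / 2)}"

definition phi :: "real \<Rightarrow> real \<times> real \<Rightarrow> real \<times> real" where
  "phi s p = (let q = (SOME q. q \<in> Pfund \<and> p - q \<in> Lambda) in
      if snd q \<ge> 0 then q + (1/2, - sqrt 3 / 2) else q + (-1/2, sqrt 3 / 2))"

end

theory Submission
  imports Defs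
begin



definition ca :: "real \<times> real \<Rightarrow> real" where "ca p = fst p - snd p / sqrt 3"
definition cb :: "real \<times> real \<Rightarrow> real" where "cb p = 2 * snd p / sqrt 3"
definition PP :: "real \<Rightarrow> real \<Rightarrow> real \<times> real" where "PP a b = (a + b/2, sqrt 3 * b / 2)"

lemma s3: "sqrt 3 \<noteq> (0::real)" "sqrt 3 * sqrt 3 = (3::real)" by auto

lemma ca_PP[simp]: "ca (PP a b) = a" by (simp add: ca_def PP_def)
lemma cb_PP[simp]: "cb (PP a b) = b" by (simp add: cb_def PP_def)
lemma PP_c: "PP (ca p) (cb p) = p"
  by (cases p) (simp add: ca_def cb_def PP_def field_simps)
lemma c_eq: "p = q \<longleftrightarrow> ca p = ca q \<and> cb p = cb q"
  by (metis PP_c)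
lemma ca_add[simp]: "ca (p + q) = ca p + ca q" by (simp add: ca_def field_simps)
lemma cb_add[simp]: "cb (p + q) = cb p + cb q" by (simp add: cb_def add_divide_distrib distrib_left)
lemma ca_diff[simp]: "ca (p - q) = ca p - ca q" by (simp add: ca_def diff_divide_distrib)
lemma cb_diff[simp]: "cb (p - q) = cb p - cb q" by (simp add: cb_def diff_divide_distrib right_diff_distrib)
lemma ca_minus[simp]: "ca (- p) = - ca p" by (simp add: ca_def)
lemma cb_minus[simp]: "cb (- p) = - cb p" by (simp add: cb_def)
lemma ca_scale[simp]: "ca (r *\<^sub>R p) = r * ca p" by (simp add: ca_def field_simps)
lemma cb_scale[simp]: "cb (r *\<^sub>R p) = r * cb p" by (simp add: cb_def field_simps)
lemma ca_pair: "ca (x, y) = x - y / sqrt 3" by (simp add: ca_def)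
lemma cb_pair: "cb (x, y) = 2 * y / sqrt 3" by (simp add: cb_def)

lemma ca_om[simp]: "ca (omega 0) = 1" "ca (omega 1) = -1" "ca (omega 2) = 0"
  by (simp_all add: omega_def ca_def)
lemma cb_om[simp]: "cb (omega 0) = 0" "cb (omega 1) = 1" "cb (omega 2) = -1"
  by (simp_all add: omega_def cb_def)

lemma Lambda_iff: "x \<in> Lambda \<longleftrightarrow> (\<exists>i j::int. ca x = 2 * of_int i \<and> cb x = 2 * of_int j)"
proof
  assume "x \<in> Lambda"
  then obtain a b :: int where x: "x = of_int a *\<^sub>R (2, 0) + of_int b *\<^sub>R (1, - sqrt 3)"
    by (auto simp: Lambda_def)
  show "\<exists>i j::int. ca x = 2 * of_int i \<and> cb x = 2 * of_int j"
    by (rule exI[of _ "a+b"], rule exI[of _ "-b"]) (simp add: x ca_def cb_def)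
next
  assume "\<exists>i j::int. ca x = 2 * of_int i \<and> cb x = 2 * of_int j"
  then obtain i j :: int where ij: "ca x = 2 * of_int i" "cb x = 2 * of_int j" by blast
  have "x = of_int (i + j) *\<^sub>R (2, 0) + of_int (-j) *\<^sub>R (1, - sqrt 3)"
    by (subst c_eq) (simp add: ij ca_pair cb_pair algebra_simps)
  then show "x \<in> Lambda" unfolding Lambda_def by blast
qed

lemma L_add: "x \<in> Lambda \<Longrightarrow> y \<in> Lambda \<Longrightarrow> x + y \<in> Lambda"
  unfolding Lambda_iff by (metis ca_add cb_add distrib_left of_int_add)
lemma L_diff: "x \<in> Lambda \<Longrightarrow> y \<in> Lambda \<Longrightarrow> x - y \<in> Lambda"
  unfolding Lambda_iff by (metis ca_diff cb_diff right_diff_distrib of_int_diff)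
lemma L_0: "0 \<in> Lambda"
  unfolding Lambda_iff by (rule exI[of _ 0], rule exI[of _ 0]) (simp add: ca_def cb_def)




definition TU :: "real \<Rightarrow> real \<Rightarrow> (real\<times>real) set" where
  "TU n m = convex hull {PP n m, PP (n+1) m, PP n (m+1)}"
definition TD :: "real \<Rightarrow> real \<Rightarrow> (real\<times>real) set" where
  "TD n m = convex hull {PP (n+1) m, PP n (m+1), PP (n+1) (m+1)}"

lemma mem_TU: "p \<in> TU n m \<longleftrightarrow> n \<le> ca p \<and> m \<le> cb p \<and> ca p + cb p \<le> n + m + 1"
proof
  assume "p \<in> TU n m"
  then obtain u v w where "0 \<le> u" "0 \<le> v" "0 \<le> w" and s: "u+v+w = 1"
     and pe: "p = u *\<^sub>R PP n m + v *\<^sub>R PP (n+1) m + w *\<^sub>R PP n (m+1)"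
    unfolding TU_def convex_hull_3 by blast
  have "ca p = u * n + v * (n+1) + w * n" "cb p = u * m+v * m+w * (m+1)" by (simp_all add: pe)
  moreover have "u * n + v * (n+1) + w * n = (u+v+w)*n + v" by (simp add: algebra_simps)
  moreover have "u * m+v * m+w * (m+1) = (u+v+w)*m + w" by (simp add: algebra_simps)
  ultimately show "n \<le> ca p \<and> m \<le> cb p \<and> ca p + cb p \<le> n + m + 1"
    using s \<open>0 \<le> u\<close> \<open>0 \<le> v\<close> \<open>0 \<le> w\<close> by simp
next
  assume h: "n \<le> ca p \<and> m \<le> cb p \<and> ca p + cb p \<le> n + m + 1"
  have "p = (1 - (ca p - n) - (cb p - m)) *\<^sub>R PP n m + (ca p - n) *\<^sub>R PP (n+1) m + (cb p - m) *\<^sub>R PP n (m+1)"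
    by (subst c_eq) (simp add: algebra_simps)
  then show "p \<in> TU n m" unfolding TU_def convex_hull_3 using h
    by (intro CollectI exI[of _ "1 - (ca p - n) - (cb p - m)"] exI[of _ "ca p - n"] exI[of _ "cb p - m"]) auto
qed

lemma mem_TD: "p \<in> TD n m \<longleftrightarrow> ca p \<le> n + 1 \<and> cb p \<le> m + 1 \<and> n + m + 1 \<le> ca p + cb p"
proof
  assume "p \<in> TD n m"
  then obtain u v w where "0 \<le> u" "0 \<le> v" "0 \<le> w" and s: "u+v+w = 1"
     and pe: "p = u *\<^sub>R PP (n+1) m + v *\<^sub>R PP n (m+1) + w *\<^sub>R PP (n+1) (m+1)"
    unfolding TD_def convex_hull_3 by blast
  have "ca p = u * (n+1) + v * n + w * (n+1)" "cb p = u * m+v * (m+1)+w * (m+1)" by (simp_all add: pe)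
  moreover have "u * (n+1) + v * n + w * (n+1) = (u+v+w)*(n+1) - v" by (simp add: algebra_simps)
  moreover have "u * m+v * (m+1)+w * (m+1) = (u+v+w)*(m+1) - u" by (simp add: algebra_simps)
  ultimately show "ca p \<le> n + 1 \<and> cb p \<le> m + 1 \<and> n + m + 1 \<le> ca p + cb p"
    using s \<open>0 \<le> u\<close> \<open>0 \<le> v\<close> \<open>0 \<le> w\<close> by simp
next
  assume h: "ca p \<le> n + 1 \<and> cb p \<le> m + 1 \<and> n + m + 1 \<le> ca p + cb p"
  have "p = (1 - (n + 1 - ca p) - (m + 1 - cb p)) *\<^sub>R PP (n+1) (m+1) + (n + 1 - ca p) *\<^sub>R PP n (m+1) + (m + 1 - cb p) *\<^sub>R PP (n+1) m"
    by (subst c_eq) (simp add: algebra_simps)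
  then have "p = (m + 1 - cb p) *\<^sub>R PP (n+1) m + (n + 1 - ca p) *\<^sub>R PP n (m+1) + (1 - (n + 1 - ca p) - (m + 1 - cb p)) *\<^sub>R PP (n+1) (m+1)"
    by (simp add: algebra_simps)
  then show "p \<in> TD n m" unfolding TD_def convex_hull_3 using h
    by (intro CollectI exI[of _ "m + 1 - cb p"] exI[of _ "n + 1 - ca p"] exI[of _ "1 - (n + 1 - ca p) - (m + 1 - cb p)"]) auto
qed




lemma refl_lin: "linear (\<lambda>p::real\<times>real. (2 * ((p \<bullet> d) / (d \<bullet> d))) *\<^sub>R d - p)"
  by (rule linearI) (simp_all add: inner_add_left algebra_simps add_divide_distrib scaleR_add_left)

lemma refl_eq: "reflect_line a b = (\<lambda>x. (a + a - (2 * ((a \<bullet> (b-a)) / ((b-a) \<bullet> (b-a)))) *\<^sub>R (b - a)) + x) \<circ> (\<lambda>p. (2 * ((p \<bullet> (b-a)) / ((b-a) \<bullet> (b-a)))) *\<^sub>R (b-a) - p)"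
proof (rule ext)
  fix p
  define d where "d = b - a"
  have e: "2 * ((p - a) \<bullet> d / (d \<bullet> d)) = 2 * (p \<bullet> d / (d \<bullet> d)) - 2 * (a \<bullet> d / (d \<bullet> d))"
    by (simp add: inner_diff_left diff_divide_distrib algebra_simps)
  have "reflect_line a b p = a + (2 * ((p - a) \<bullet> d / (d \<bullet> d))) *\<^sub>R d - (p - a)"
    by (simp add: reflect_line_def d_def)
  also have "\<dots> = (a + a - (2 * (a \<bullet> d / (d \<bullet> d))) *\<^sub>R d) + ((2 * (p \<bullet> d / (d \<bullet> d))) *\<^sub>R d - p)"
    unfolding e scaleR_left_diff_distrib by (simp add: algebra_simps)
  finally show "reflect_line a b p = ((\<lambda>x. (a + a - (2 * ((a \<bullet> (b-a)) / ((b-a) \<bullet> (b-a)))) *\<^sub>R (b - a)) + x) \<circ> (\<lambda>p. (2 * ((p \<bullet> (b-a)) / ((b-a) \<bullet> (b-a)))) *\<^sub>R (b-a) - p)) p"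
    by (simp add: d_def)
qed

lemma refl_hull: "reflect_line a b ` (convex hull S) = convex hull (reflect_line a b ` S)"
  unfolding refl_eq image_comp[symmetric] convex_hull_linear_image[OF refl_lin]
  by (simp add: convex_hull_translation)

lemma iota_hull: "iota ` (convex hull S) = convex hull (iota ` S)"
proof -
  have "linear iota" unfolding iota_def by (rule linear_uminus)
  then show ?thesis by (rule convex_hull_linear_image)
qed

lemma v1: "vert 1 = PP (-1) 0" by (simp add: vert_def PP_def)
lemma v2: "vert 2 = PP (-1) 1" by (simp add: vert_def PP_def)
lemma v3: "vert 3 = PP 0 0" by (simp add: vert_def PP_def)
lemma v1': "vert (Suc 0) = PP (-1) 0" by (simp add: vert_def PP_def)
lemma v2': "vert (Suc (Suc 0)) = PP (-1) 1" by (simp add: vert_def PP_def)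

lemma iPP: "iota (PP a b) = PP (-a) (-b)" by (simp add: iota_def PP_def)

lemma rPP: "reflect_line (PP a b) (PP c d) (PP e f) = PP (ca (reflect_line (PP a b) (PP c d) (PP e f))) (cb (reflect_line (PP a b) (PP c d) (PP e f)))"
  by (simp add: PP_c)

lemma r12: "reflect_line (PP (-1) 0) (PP (-1) 1) (PP 0 0) = PP (-2) 1"
  by (simp add: reflect_line_def PP_def inner_prod_def field_simps)
lemma r23: "reflect_line (PP (-1) 1) (PP 0 0) (PP (-1) 0) = PP 0 1"
  by (simp add: reflect_line_def PP_def inner_prod_def field_simps)
lemma r31: "reflect_line (PP 0 0) (PP (-1) 0) (PP (-1) 1) = PP 0 (-1)"
  by (simp add: reflect_line_def PP_def inner_prod_def field_simps)

lemma rfix1: "reflect_line a b a = a" by (simp add: reflect_line_def)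
lemma rfix2: assumes "a \<noteq> b" shows "reflect_line a b b = b"
proof -
  have "(b-a) \<bullet> (b-a) \<noteq> 0" using assms by simp
  then have "((b - a) \<bullet> (b - a)) / ((b - a) \<bullet> (b - a)) = 1" by simp
  then show ?thesis unfolding reflect_line_def by (simp add: scaleR_2 algebra_simps)
qed

lemma PPne: "PP a b = PP c d \<longleftrightarrow> a = c \<and> b = d" by (metis ca_PP cb_PP)

lemma A0: "A 0 = TU (-1) 0"
  by (simp add: A_def TU_def v1 v2 v3 v1' v2' insert_commute)
lemma A1: "A 1 = TD (-2) 0"
  by (simp add: A_def TD_def v1 v2 v3 v1' v2' refl_hull rfix1 rfix2 PPne r12 insert_commute)
lemma A2: "A 2 = TD (-1) 0"
  by (simp add: A_def TD_def v1 v2 v3 v1' v2' refl_hull rfix1 rfix2 PPne r23 insert_commute)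
lemma A3: "A 3 = TD (-1) (-1)"
  by (simp add: A_def TD_def v1 v2 v3 v1' v2' refl_hull rfix1 rfix2 PPne r31 insert_commute)
lemma iA0: "iota ` A 0 = TD 0 (-1)"
  unfolding A0 by (simp add: TU_def TD_def iota_hull iPP insert_commute)
lemma iA1: "iota ` A 1 = TU 1 (-1)"
  unfolding A1 by (simp add: TU_def TD_def iota_hull iPP insert_commute)
lemma iA2: "iota ` A 2 = TU 0 (-1)"
  unfolding A2 by (simp add: TU_def TD_def iota_hull iPP insert_commute)
lemma iA3: "iota ` A 3 = TU 0 0"
  unfolding A3 by (simp add: TU_def TD_def iota_hull iPP insert_commute)




definition gen :: "real\<times>real \<Rightarrow> bool" where
  "gen q \<longleftrightarrow> ca q \<notin> \<int> \<and> cb q \<notin> \<int> \<and> ca q + cb q \<notin> \<int>"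

lemma le_nonint: "(x::real) \<notin> \<int> \<Longrightarrow> (x \<le> of_int k) \<longleftrightarrow> \<lfloor>x\<rfloor> < k"
  by (metis Ints_of_int floor_less_iff order_le_less)

lemma floor_cases: "\<lfloor>x + y\<rfloor> = \<lfloor>x\<rfloor> + \<lfloor>y\<rfloor> \<or> \<lfloor>x + y\<rfloor> = \<lfloor>x\<rfloor> + \<lfloor>y::real\<rfloor> + 1"
  by (simp add: floor_add)

lemma tm_iff: "torus_mem q S \<longleftrightarrow> (\<exists>i j::int. PP (ca q - 2 * of_int i) (cb q - 2 * of_int j) \<in> S)"
proof
  assume "torus_mem q S"
  then obtain r where r: "r \<in> S" "q - r \<in> Lambda" unfolding torus_mem_def by blast
  then obtain i j :: int where "ca (q - r) = 2 * of_int i" "cb (q - r) = 2 * of_int j"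
    unfolding Lambda_iff by blast
  then have "r = PP (ca q - 2 * of_int i) (cb q - 2 * of_int j)" by (subst c_eq) simp
  then show "\<exists>i j::int. PP (ca q - 2 * of_int i) (cb q - 2 * of_int j) \<in> S" using r by blast
next
  assume "\<exists>i j::int. PP (ca q - 2 * of_int i) (cb q - 2 * of_int j) \<in> S"
  then obtain i j :: int where r: "PP (ca q - 2 * of_int i) (cb q - 2 * of_int j) \<in> S" by blast
  have "q - PP (ca q - 2 * of_int i) (cb q - 2 * of_int j) \<in> Lambda"
    unfolding Lambda_iff by (rule exI[of _ i], rule exI[of _ j]) simp
  then show "torus_mem q S" using r unfolding torus_mem_def by blast
qed

lemma tm_TU:
  assumes g: "gen q"
  shows "torus_mem q (TU (of_int n) (of_int m)) \<longleftrightarrow>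
     (even (\<lfloor>ca q\<rfloor> - n) \<and> even (\<lfloor>cb q\<rfloor> - m) \<and> \<lfloor>ca q + cb q\<rfloor> = \<lfloor>ca q\<rfloor> + \<lfloor>cb q\<rfloor>)"
proof -
  have ga: "ca q \<notin> \<int>" and gab: "ca q + cb q \<notin> \<int>" using g by (auto simp: gen_def)
  have e: "PP (ca q - 2 * of_int i) (cb q - 2 * of_int j) \<in> TU (of_int n) (of_int m) \<longleftrightarrow>
     (n + 2 * i \<le> \<lfloor>ca q\<rfloor> \<and> m + 2 * j \<le> \<lfloor>cb q\<rfloor> \<and> \<lfloor>ca q + cb q\<rfloor> < n + m + 1 + 2 * i + 2 * j)" for i j
  proof -
    have 1: "of_int n \<le> ca q - 2 * of_int i \<longleftrightarrow> of_int (n + 2 * i) \<le> ca q"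
      by (simp add: algebra_simps)
    have 2: "of_int m \<le> cb q - 2 * of_int j \<longleftrightarrow> of_int (m + 2 * j) \<le> cb q"
      by (simp add: algebra_simps)
    have 3: "ca q - 2 * of_int i + (cb q - 2 * of_int j) \<le> of_int n + of_int m + 1 \<longleftrightarrow>
         ca q + cb q \<le> of_int (n + m + 1 + 2 * i + 2 * j)" by (simp add: algebra_simps)
    show ?thesis unfolding mem_TU ca_PP cb_PP 1 2 3 le_nonint[OF gab] le_floor_iff ..
  qed
  show ?thesis unfolding tm_iff e using floor_cases[of "ca q" "cb q"] by presburger
qed

lemma tm_TD:
  assumes g: "gen q"
  shows "torus_mem q (TD (of_int n) (of_int m)) \<longleftrightarrow>
     (even (\<lfloor>ca q\<rfloor> - n) \<and> even (\<lfloor>cb q\<rfloor> - m) \<and> \<lfloor>ca q + cb q\<rfloor> = \<lfloor>ca q\<rfloor> + \<lfloor>cb q\<rfloor> + 1)"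
proof -
  have ga: "ca q \<notin> \<int>" and gb: "cb q \<notin> \<int>" using g by (auto simp: gen_def)
  have e: "PP (ca q - 2 * of_int i) (cb q - 2 * of_int j) \<in> TD (of_int n) (of_int m) \<longleftrightarrow>
     (\<lfloor>ca q\<rfloor> < n + 1 + 2 * i \<and> \<lfloor>cb q\<rfloor> < m + 1 + 2 * j \<and> n + m + 1 + 2 * i + 2 * j \<le> \<lfloor>ca q + cb q\<rfloor>)" for i j
  proof -
    have 1: "ca q - 2 * of_int i \<le> of_int n + 1 \<longleftrightarrow> ca q \<le> of_int (n + 1 + 2 * i)"
      by (simp add: algebra_simps)
    have 2: "cb q - 2 * of_int j \<le> of_int m + 1 \<longleftrightarrow> cb q \<le> of_int (m + 1 + 2 * j)"
      by (simp add: algebra_simps)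
    have 3: "of_int n + of_int m + 1 \<le> ca q - 2 * of_int i + (cb q - 2 * of_int j) \<longleftrightarrow>
         of_int (n + m + 1 + 2 * i + 2 * j) \<le> ca q + cb q" by (simp add: algebra_simps)
    show ?thesis unfolding mem_TD ca_PP cb_PP 1 2 3 le_nonint[OF ga] le_nonint[OF gb] le_floor_iff ..
  qed
  show ?thesis unfolding tm_iff e using floor_cases[of "ca q" "cb q"] by presburger
qed




lemma tm_Un: "torus_mem p (S \<union> T) \<longleftrightarrow> torus_mem p S \<or> torus_mem p T"
  unfolding torus_mem_def by blast

lemma A0': "A 0 = TU (of_int (-1)) (of_int 0)" unfolding A0 by simp
lemma A1': "A 1 = TD (of_int (-2)) (of_int 0)" unfolding A1 by simp
lemma A2': "A 2 = TD (of_int (-1)) (of_int 0)" unfolding A2 by simp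
lemma A3': "A 3 = TD (of_int (-1)) (of_int (-1))" unfolding A3 by simp
lemma iA0': "iota ` A 0 = TD (of_int 0) (of_int (-1))" unfolding iA0 by simp
lemma iA1': "iota ` A 1 = TU (of_int 1) (of_int (-1))" unfolding iA1 by simp
lemma iA2': "iota ` A 2 = TU (of_int 0) (of_int (-1))" unfolding iA2 by simp
lemma iA3': "iota ` A 3 = TU (of_int 0) (of_int 0)" unfolding iA3 by simp

lemma S0: "(\<Union>\<alpha>\<in>{0,1,2,3::nat} - {3 - 0}. A \<alpha>) \<union> iota ` A (3 - 0) = A 0 \<union> A 1 \<union> A 2 \<union> iota ` A 3"
  by (auto simp: insert_Diff_if)
lemma S1: "(\<Union>\<alpha>\<in>{0,1,2,3::nat} - {3 - 1}. A \<alpha>) \<union> iota ` A (3 - 1) = A 0 \<union> A 1 \<union> A 3 \<union> iota ` A 2"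
  by (auto simp: insert_Diff_if)
lemma S2: "(\<Union>\<alpha>\<in>{0,1,2,3::nat} - {3 - 2}. A \<alpha>) \<union> iota ` A (3 - 2) = A 0 \<union> A 2 \<union> A 3 \<union> iota ` A 1"
  by (auto simp: insert_Diff_if)

lemma sig0: assumes g: "gen q" shows "sigma 0 q = (if even \<lfloor>cb q\<rfloor> then 1 else -1)"
  unfolding sigma_def S0 tm_Un A0' A1' A2' iA3' tm_TU[OF g] tm_TD[OF g]
  apply (rule if_cong[OF _ refl refl])
  using floor_cases[of "ca q" "cb q"] by presburger

lemma sig1: assumes g: "gen q" shows "sigma 1 q = (if odd \<lfloor>ca q + cb q\<rfloor> then 1 else -1)"
  unfolding sigma_def S1 tm_Un A0' A1' A3' iA2' tm_TU[OF g] tm_TD[OF g]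
  apply (rule if_cong[OF _ refl refl])
  using floor_cases[of "ca q" "cb q"] by presburger

lemma sig2: assumes g: "gen q" shows "sigma 2 q = (if odd \<lfloor>ca q\<rfloor> then 1 else -1)"
  unfolding sigma_def S2 tm_Un A0' A2' A3' iA1' tm_TU[OF g] tm_TD[OF g]
  apply (rule if_cong[OF _ refl refl])
  using floor_cases[of "ca q" "cb q"] by presburger



definition cc :: "real \<times> real" where "cc = (1/2, - sqrt 3 / 2)"
lemma ca_cc[simp]: "ca cc = 1" by (simp add: cc_def ca_def)
lemma cb_cc[simp]: "cb cc = -1" by (simp add: cc_def cb_def)
lemma sig_pm: "\<exists>e::int. sigma i q = of_int e \<and> (e = 1 \<or> e = -1)"
  unfolding sigma_def by (metis of_int_1 of_int_minus)
lemma Ints_shift: "x + of_int k \<in> \<int> \<longleftrightarrow> (x::real) \<in> \<int>"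
proof
  assume "x + of_int k \<in> \<int>"
  then have "x + of_int k - of_int k \<in> \<int>" by (intro Ints_diff) auto
  then show "x \<in> \<int>" by simp
qed auto

lemma gen_shift: assumes "gen q" "ca d = of_int k1" "cb d = of_int k2" shows "gen (q + d)"
proof -
  have "ca q + cb q + of_int (k1 + k2) \<notin> \<int>" using assms(1) Ints_shift gen_def by blast
  moreover have "ca (q+d) + cb (q+d) = ca q + cb q + of_int (k1 + k2)" using assms by simp
  moreover have "ca (q+d) = ca q + of_int k1" "cb (q+d) = cb q + of_int k2" using assms by simp_all
  ultimately show ?thesis using assms(1) Ints_shift unfolding gen_def by metis
qed

lemma flip0: assumes "gen q" "ca d = of_int k1" "cb d = of_int k2"
  shows "sigma 0 (q + d) = (if even k2 then sigma 0 q else - sigma 0 q)"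
proof -
  have g: "gen (q + d)" by (rule gen_shift[OF assms])
  have "cb (q + d) = cb q + of_int k2" using assms(3) by simp
  then have fl: "\<lfloor>cb (q + d)\<rfloor> = \<lfloor>cb q\<rfloor> + k2" by (simp only: floor_add_int)
  show ?thesis unfolding sig0[OF g] sig0[OF assms(1)] fl by (simp only: even_add) simp
qed

lemma flip1: assumes "gen q" "ca d = of_int k1" "cb d = of_int k2"
  shows "sigma 1 (q + d) = (if even (k1 + k2) then sigma 1 q else - sigma 1 q)"
proof -
  have g: "gen (q + d)" by (rule gen_shift[OF assms])
  have "ca (q + d) + cb (q + d) = (ca q + cb q) + of_int (k1 + k2)" using assms(2,3) by simp
  then have fl: "\<lfloor>ca (q + d) + cb (q + d)\<rfloor> = \<lfloor>ca q + cb q\<rfloor> + (k1 + k2)" by (simp only: floor_add_int)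
  show ?thesis unfolding sig1[OF g] sig1[OF assms(1)] fl by (simp only: even_add) simp
qed

lemma flip2: assumes "gen q" "ca d = of_int k1" "cb d = of_int k2"
  shows "sigma 2 (q + d) = (if even k1 then sigma 2 q else - sigma 2 q)"
proof -
  have g: "gen (q + d)" by (rule gen_shift[OF assms])
  have "ca (q + d) = ca q + of_int k1" using assms(2) by simp
  then have fl: "\<lfloor>ca (q + d)\<rfloor> = \<lfloor>ca q\<rfloor> + k1" by (simp only: floor_add_int)
  show ?thesis unfolding sig2[OF g] sig2[OF assms(1)] fl by (simp only: even_add) simp
qed



lemma om_suc[simp]: "ca (omega (Suc 0)) = -1" "cb (omega (Suc 0)) = 1"
  by (simp_all add: omega_def ca_def cb_def)

lemma key:
  assumes g0: "gen q" and g1: "gen (ftil s 0 q)" and g2: "gen (ftil s 1 (ftil s 0 q))"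
  shows "pet (1-s) (q + cc) - pet s q - cc \<in> Lambda"
proof -
  define q1 where "q1 = ftil s 0 q"
  define q2 where "q2 = ftil s 1 q1"
  define q3 where "q3 = ftil s 2 q2"
  define r1 where "r1 = ftil (1-s) 0 (q + cc)"
  define r2 where "r2 = ftil (1-s) 1 r1"
  define r3 where "r3 = ftil (1-s) 2 r2"
  have g1': "gen q1" using g1 q1_def by simp
  have g2': "gen q2" using g2 q1_def q2_def by simp
  obtain e0 :: int where e0: "sigma 0 q = of_int e0" "e0 = 1 \<or> e0 = -1" using sig_pm by blast
  obtain e1 :: int where e1: "sigma 1 q1 = of_int e1" "e1 = 1 \<or> e1 = -1" using sig_pm by blast
  obtain e2 :: int where e2: "sigma 2 q2 = of_int e2" "e2 = 1 \<or> e2 = -1" using sig_pm by blast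
  have s0: "sigma 0 (q + cc) = - of_int e0"
    using flip0[OF g0, of cc 1 "-1"] e0 by simp
  have a1: "ca (r1 - q1) = of_int (1 - e0)" "cb (r1 - q1) = of_int (-1)"
    unfolding r1_def q1_def ftil_def s0 e0(1) by (simp_all add: algebra_simps)
  have "r1 = q1 + (r1 - q1)" by simp
  have s1: "sigma 1 r1 = - of_int e1"
    using flip1[OF g1' a1] e0(2) e1(1) by auto
  have a2: "ca (r2 - q2) = of_int (1 - e0 + e1)" "cb (r2 - q2) = of_int (-1 - e1)"
    using a1 unfolding r2_def q2_def ftil_def s1 e1(1) by (simp_all add: algebra_simps)
  have "odd (1 - e0 + e1)" using e0(2) e1(2) by auto
  then have "sigma 2 (q2 + (r2 - q2)) = - sigma 2 q2" using flip2[OF g2' a2] by simp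
  then have s2: "sigma 2 r2 = - of_int e2" by (simp add: e2(1))
  have a3: "ca (r3 - q3) = of_int (1 - e0 + e1)" "cb (r3 - q3) = of_int (-1 - e1 + e2)"
    using a2 unfolding r3_def q3_def ftil_def s2 e2(1) by (simp_all add: algebra_simps)
  have pe: "pet (1-s) (q + cc) = r3" "pet s q = q3"
    unfolding pet_def r3_def r2_def r1_def q3_def q2_def q1_def by simp_all
  have "even (e1 - e0)" using e0(2) e1(2) by auto
  then obtain i where i: "e1 - e0 = 2 * i" by (rule evenE)
  have "even (e2 - e1)" using e1(2) e2(2) by auto
  then obtain j where j: "e2 - e1 = 2 * j" by (rule evenE)
  have "ca (r3 - q3 - cc) = 2 * of_int i" "cb (r3 - q3 - cc) = 2 * of_int j"
    using a3 i j by (simp_all add: algebra_simps of_int_diff[symmetric] del: of_int_diff)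
  then show ?thesis unfolding pe Lambda_iff by blast
qed




lemma L_minus: "x \<in> Lambda \<Longrightarrow> - x \<in> Lambda"
  using L_diff[OF L_0] by fastforce

lemma tm_shift: "l \<in> Lambda \<Longrightarrow> torus_mem (p + l) S \<longleftrightarrow> torus_mem p S"
proof -
  assume l: "l \<in> Lambda"
  have "(p + l - r \<in> Lambda) \<longleftrightarrow> (p - r \<in> Lambda)" for r
  proof
    assume "p + l - r \<in> Lambda" then have "p + l - r - l \<in> Lambda" using L_diff l by blast
    then show "p - r \<in> Lambda" by (simp add: algebra_simps)
  next
    assume "p - r \<in> Lambda" then have "p - r + l \<in> Lambda" using L_add l by blast
    then show "p + l - r \<in> Lambda" by (simp add: algebra_simps)
  qed
  then show ?thesis unfolding torus_mem_def by simp
qed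

lemma sigma_shift: "l \<in> Lambda \<Longrightarrow> sigma i (p + l) = sigma i p"
  unfolding sigma_def by (simp add: tm_shift)

lemma ftil_shift: assumes "l \<in> Lambda" shows "ftil u i (p + l) = ftil u i p + l"
  unfolding ftil_def sigma_shift[OF assms] by (simp add: algebra_simps)

lemma pet_shift: "l \<in> Lambda \<Longrightarrow> pet u (p + l) = pet u p + l"
  unfolding pet_def by (simp add: ftil_shift)

lemma Pfund_PP: "Pfund = convex hull {PP (-2) 1, PP 0 1, PP 2 (-1), PP 0 (-1)}"
proof -
  have "PP (-2) 1 = (-3/2, sqrt 3 / 2)" "PP 0 1 = (1/2, sqrt 3 / 2)"
       "PP 2 (-1) = (3/2, - sqrt 3 / 2)" "PP 0 (-1) = (-1/2, - sqrt 3 / 2)"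
    by (simp_all add: PP_def)
  then show ?thesis unfolding Pfund_def by simp
qed

lemma Pfund_ex: "\<exists>q. q \<in> Pfund \<and> p - q \<in> Lambda"
proof -
  define be where "be = frac ((1 - cb p) / 2)"
  define al where "al = frac ((ca p + 2 - 2 * be) / 2)"
  have b0: "0 \<le> be" "be \<le> 1" using frac_lt_1[of "(1 - cb p) / 2"] by (simp_all add: be_def frac_ge_0)
  have a0: "0 \<le> al" "al \<le> 1" using frac_lt_1[of "(ca p + 2 - 2 * be) / 2"] by (simp_all add: al_def frac_ge_0)
  let ?H = "convex hull {PP (-2) 1, PP 0 1, PP 2 (-1), PP 0 (-1)}"
  have cv: "convex ?H" by simp
  have x1: "(1 - al) *\<^sub>R PP (-2) 1 + al *\<^sub>R PP 0 1 \<in> ?H"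
    using a0 by (intro convexD[OF cv] hull_inc) auto
  have x2: "(1 - al) *\<^sub>R PP 0 (-1) + al *\<^sub>R PP 2 (-1) \<in> ?H"
    using a0 by (intro convexD[OF cv] hull_inc) auto
  define q where "q = (1 - be) *\<^sub>R ((1 - al) *\<^sub>R PP (-2) 1 + al *\<^sub>R PP 0 1) + be *\<^sub>R ((1 - al) *\<^sub>R PP 0 (-1) + al *\<^sub>R PP 2 (-1))"
  have qH: "q \<in> Pfund" unfolding Pfund_PP q_def using b0 by (intro convexD[OF cv] x1 x2) auto
  have cq: "ca q = -2 + 2 * al + 2 * be" "cb q = 1 - 2 * be"
    unfolding q_def by (simp_all add: algebra_simps)
  have ae: "al = (ca p + 2 - 2 * be) / 2 - of_int \<lfloor>(ca p + 2 - 2 * be) / 2\<rfloor>" by (simp add: al_def frac_def)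
  have be: "be = (1 - cb p) / 2 - of_int \<lfloor>(1 - cb p) / 2\<rfloor>" by (simp add: be_def frac_def)
  have "ca (p - q) = 2 * of_int \<lfloor>(ca p + 2 - 2 * be) / 2\<rfloor>"
    using cq(1) ae by (simp add: field_simps)
  moreover have "cb (p - q) = 2 * of_int (- \<lfloor>(1 - cb p) / 2\<rfloor>)"
    using cq(2) be by (simp add: field_simps)
  ultimately have "p - q \<in> Lambda" unfolding Lambda_iff by blast
  then show ?thesis using qH by blast
qed

lemma phi_L: "phi s p - p - cc \<in> Lambda"
proof -
  define q where "q = (SOME q. q \<in> Pfund \<and> p - q \<in> Lambda)"
  have q: "q \<in> Pfund \<and> p - q \<in> Lambda" unfolding q_def using Pfund_ex by (rule someI_ex)
  then have m: "q - p \<in> Lambda" using L_minus by fastforce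
  show ?thesis
  proof (cases "snd q \<ge> 0")
    case True
    then have e: "phi s p - p - cc = q - p" unfolding phi_def q_def[symmetric] by (simp add: cc_def)
    show ?thesis unfolding e by (rule m)
  next
    case False
    then have e: "phi s p - p - cc = (q - p) + (-1, sqrt 3)" unfolding phi_def q_def[symmetric] by (simp add: cc_def)
    have "(-1, sqrt 3) \<in> Lambda" unfolding Lambda_iff
      by (rule exI[of _ "-1"], rule exI[of _ 1]) (simp add: ca_pair cb_pair)
    then show ?thesis unfolding e by (rule L_add[OF m])
  qed
qed




lemma notInt: "(\<And>n::int. x \<noteq> of_int n) \<Longrightarrow> (x::real) \<notin> \<int>"
  by (metis Ints_cases)

lemma good_ex:
  assumes "e > 0"
  shows "\<exists>q \<in> ball p e. gen q \<and> gen (ftil s 0 q) \<and> gen (ftil s 1 (ftil s 0 q))"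
proof -
  define B1 where "B1 = (\<lambda>(n::int, k::int). of_int n - ca p - of_int k * s) ` UNIV"
  define B2 where "B2 = (\<lambda>(n::int, k::int). of_int n - cb p - of_int k * s) ` UNIV"
  define B3 where "B3 = (\<lambda>(n::int, k::int). (of_int n - ca p - cb p - of_int k * s) / 2) ` UNIV"
  have "countable (B1 \<union> B2 \<union> B3)" unfolding B1_def B2_def B3_def
    by (intro countable_Un countable_image countableI_type)
  moreover have "uncountable {0<..<e/3}" using assms by (simp add: uncountable_open_interval)
  ultimately have "uncountable ({0<..<e/3} - (B1 \<union> B2 \<union> B3))" by (rule uncountable_minus_countable[rotated])
  then have "{0<..<e/3} - (B1 \<union> B2 \<union> B3) \<noteq> {}" by (metis countable_empty)
  then obtain t where "t \<in> {0<..<e/3} - (B1 \<union> B2 \<union> B3)" by blast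
  then have t: "t \<in> {0<..<e/3}" "t \<notin> B1" "t \<notin> B2" "t \<notin> B3" by simp_all
  have G1: "ca p + t + of_int k * s \<noteq> of_int n" for n k
  proof
    assume "ca p + t + of_int k * s = of_int n"
    then have "t = (\<lambda>(n::int, k::int). of_int n - ca p - of_int k * s) (n, k)" by simp
    then show False using t(2) unfolding B1_def by blast
  qed
  have G2: "cb p + t + of_int k * s \<noteq> of_int n" for n k
  proof
    assume "cb p + t + of_int k * s = of_int n"
    then have "t = (\<lambda>(n::int, k::int). of_int n - cb p - of_int k * s) (n, k)" by simp
    then show False using t(3) unfolding B2_def by blast
  qed
  have G3: "ca p + cb p + 2 * t + of_int k * s \<noteq> of_int n" for n k
  proof
    assume "ca p + cb p + 2 * t + of_int k * s = of_int n"
    then have "t = (\<lambda>(n::int, k::int). (of_int n - ca p - cb p - of_int k * s) / 2) (n, k)" by simp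
    then show False using t(4) unfolding B3_def by blast
  qed
  define q where "q = p + t *\<^sub>R PP 1 1"
  obtain e0 :: int where e0: "sigma 0 q = of_int e0" using sig_pm by blast
  obtain e1 :: int where e1: "sigma 1 (ftil s 0 q) = of_int e1" using sig_pm by blast
  have c1: "ca q = ca p + t + of_int 0 * s" "cb q = cb p + t + of_int 0 * s"
     "ca q + cb q = ca p + cb p + 2 * t + of_int 0 * s" unfolding q_def by simp_all
  have c2: "ca (ftil s 0 q) = ca p + t + of_int e0 * s" "cb (ftil s 0 q) = cb p + t + of_int 0 * s"
     "ca (ftil s 0 q) + cb (ftil s 0 q) = ca p + cb p + 2 * t + of_int e0 * s"
    unfolding ftil_def e0 by (simp_all add: c1 algebra_simps)
  have c3: "ca (ftil s 1 (ftil s 0 q)) = ca p + t + of_int (e0 - e1) * s"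
     "cb (ftil s 1 (ftil s 0 q)) = cb p + t + of_int e1 * s"
     "ca (ftil s 1 (ftil s 0 q)) + cb (ftil s 1 (ftil s 0 q)) = ca p + cb p + 2 * t + of_int e0 * s"
  proof -
    have f1: "ftil s 1 (ftil s 0 q) = ftil s 0 q + (of_int e1 * s) *\<^sub>R omega 1" by (simp only: ftil_def[of s 1 "ftil s 0 q"] e1)
    show "ca (ftil s 1 (ftil s 0 q)) = ca p + t + of_int (e0 - e1) * s"
     "cb (ftil s 1 (ftil s 0 q)) = cb p + t + of_int e1 * s"
     "ca (ftil s 1 (ftil s 0 q)) + cb (ftil s 1 (ftil s 0 q)) = ca p + cb p + 2 * t + of_int e0 * s"
      unfolding f1 using c2 by (simp_all add: algebra_simps)
  qed
  have GG: "gen X" if "ca X = ca p + t + of_int k1 * s" "cb X = cb p + t + of_int k2 * s"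
     "ca X + cb X = ca p + cb p + 2 * t + of_int k3 * s" for X k1 k2 k3
  proof -
    have "ca X \<notin> \<int>" unfolding that(1) by (rule notInt, rule G1)
    moreover have "cb X \<notin> \<int>" unfolding that(2) by (rule notInt, rule G2)
    moreover have "ca X + cb X \<notin> \<int>" unfolding that(3) by (rule notInt, rule G3)
    ultimately show ?thesis unfolding gen_def by blast
  qed
  have "gen q" "gen (ftil s 0 q)" "gen (ftil s 1 (ftil s 0 q))"
    using GG[OF c1] GG[OF c2] GG[OF c3] by blast+
  moreover have "q \<in> ball p e"
  proof -
    have "norm (PP 1 1) \<le> 3/2 + sqrt 3 / 2" using norm_Pair_le[of "3/2::real" "sqrt 3 / 2"]
      by (simp add: PP_def)
    also have "\<dots> \<le> 3" using real_sqrt_le_iff[of 3 9] by simp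
    finally have n3: "norm (PP 1 1) \<le> 3" .
    have "dist p q = t * norm (PP 1 1)" using t(1) by (simp add: q_def dist_norm)
    also have "\<dots> \<le> t * 3" using n3 t(1) by (intro mult_left_mono) auto
    also have "\<dots> < e" using t(1) by simp
    finally show ?thesis by simp
  qed
  ultimately show ?thesis by blast
qed

theorem theorem2p2:
  fixes s :: real and p :: "real \<times> real"
  assumes "1/2 \<le> s" and "s < 1"
    and "pet_defined s p"
    and "pet_defined (1 - s) (phi s p)"
  shows "phi s (pet s p) - pet (1 - s) (phi s p) \<in> Lambda"
proof -
  obtain e1 t1 where e1: "e1 > 0" "\<forall>q\<in>ball p e1. pet s q - q - t1 \<in> Lambda"
    using assms(3) unfolding pet_defined_def by blast
  obtain e2 t2 where e2: "e2 > 0" "\<forall>q\<in>ball (phi s p) e2. pet (1 - s) q - q - t2 \<in> Lambda"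
    using assms(4) unfolding pet_defined_def by blast
  define mu where "mu = phi s p - p - cc"
  have mu: "mu \<in> Lambda" unfolding mu_def by (rule phi_L)
  obtain q where q: "q \<in> ball p (min e1 e2)" "gen q" "gen (ftil s 0 q)" "gen (ftil s 1 (ftil s 0 q))"
    using good_ex[of "min e1 e2" p s] e1(1) e2(1) by auto
  have h1: "pet s q - q - t1 \<in> Lambda" using e1(2) q(1) by auto
  have "q + cc + mu \<in> ball (phi s p) e2"
  proof -
    have "phi s p - (q + cc + mu) = p - q" unfolding mu_def by (simp add: algebra_simps)
    then have "dist (phi s p) (q + cc + mu) = dist p q" unfolding dist_norm by (rule arg_cong)
    then show ?thesis using q(1) by simp
  qed
  then have "pet (1 - s) (q + cc + mu) - (q + cc + mu) - t2 \<in> Lambda" using e2(2) by blast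
  then have h2: "pet (1 - s) (q + cc) - q - cc - t2 \<in> Lambda"
    unfolding pet_shift[OF mu] by (simp add: algebra_simps)
  have h3: "pet (1 - s) (q + cc) - pet s q - cc \<in> Lambda" by (rule key[OF q(2-4)])
  have "t1 - t2 = (pet (1 - s) (q + cc) - q - cc - t2) - (pet (1 - s) (q + cc) - pet s q - cc) - (pet s q - q - t1)"
    by (simp add: algebra_simps)
  then have T: "t1 - t2 \<in> Lambda" using L_diff h1 h2 h3 by metis
  have P1: "pet s p - p - t1 \<in> Lambda" using e1 by simp
  have P2: "pet (1 - s) (phi s p) - phi s p - t2 \<in> Lambda" using e2 by simp
  have P3: "phi s (pet s p) - pet s p - cc \<in> Lambda" by (rule phi_L)
  have "phi s (pet s p) - pet (1 - s) (phi s p) =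
     (phi s (pet s p) - pet s p - cc) + (pet s p - p - t1) + (t1 - t2)
       - (pet (1 - s) (phi s p) - phi s p - t2) - mu"
    unfolding mu_def by (simp add: algebra_simps)
  then show ?thesis using L_add L_diff P1 P2 P3 T mu by metis
qed


end
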